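(* For a greedy reading policy, with $R_{\mathbf G}(n)$ the number of records read from $\mathbf R$ among the first $n$, $$\frac{R_{\mathbf G}(n)-n/2}{\sqrt n}\xrightarrow{d}\mathrm N(0,\sigma_{R_{\mathbf G}}^2)\quad(n\to\infty),\qquad \sigma_{R_{\mathbf G}}^2:=\frac{\sigma_{\mathbf R}^2+\sigma_{\mathbf S}^2}{8\mu^2}.$$
   Context: Let $(r_i)_{i\ge1}$, $(s_i)_{i\ge1}$ be probability vectors on the positive integers with $\mu:=\sum_i r_is_i>0$. Let $\{L_{\mathbf R}(n)\}_{n\ge1}$, $\{L_{\mathbf S}(n)\}_{n\ge1}$ be independent i.i.d. sequences with $\Pr(L_{\mathbf R}(1)=i)=r_i$, $\Pr(L_{\mathbf S}(1)=i)=s_i$. Put $X_{\mathbf R}(n)=s_{L_{\mathbf R}(n)}$, $X_{\mathbf S}(n)=r_{L_{\mathbf S}(n)}$ (common mean $\mu$, variances $\sigma_{\mathbf R}^2,\sigma_{\mathbf S}^2$; standing assumption $\sigma_{\mathbf R}+\sigma_{\mathbf S}>0$), and $\Gamma_{\mathbf R}[m]=\sum_{j=1}^mX_{\mathbf R}(j)$, $\Gamma_{\mathbf S}[m]=\sum_{j=1}^mX_{\mathbf S}(j)$. A reading policy is a $\{0,1\}$-valued process $C(n)$ ($C(n)=1$ iff the $n$-th record is read from $\mathbf R$), $R(n)=\sum_{j\le n}C(j)$, $S(n)=n-R(n)$, with $C(n)$ being $\mathcal F_{n-1}$-measurable where $\mathcal F_n=\mathcal F_0\vee\sigma(L_{\mathbf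 R}(1),\dots,L_{\mathbf R}(R(n));L_{\mathbf S}(1),\dots,L_{\mathbf S}(S(n)))$ and $\mathcal F_0$ (randomization) is independent of the labels. A greedy policy satisfies, for $n\ge1$, $C(n+1)=1$ if $\Gamma_{\mathbf S}[S(n)]>\Gamma_{\mathbf R}[R(n)]$ and $C(n+1)=0$ if $\Gamma_{\mathbf S}[S(n)]<\Gamma_{\mathbf R}[R(n)]$ (ties arbitrary); the subscript $\mathbf G$ refers to it. *)

theory Defs
  imports "HOL-Probability.Probability"
begin

definition Rcount :: "(nat \<Rightarrow> 'a \<Rightarrow> bool) \<Rightarrow> nat \<Rightarrow> 'a \<Rightarrow> nat" where
  "Rcount C n w = card {j \<in> {1..n}. C j w}"

definition Scount :: "(nat \<Rightarrow> 'a \<Rightarrow> bool) \<Rightarrow> nat \<Rightarrow> 'a \<Rightarrow> nat" where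
  "Scount C n w = n - Rcount C n w"

definition GammaR :: "(nat \<Rightarrow> real) \<Rightarrow> (nat \<Rightarrow> 'a \<Rightarrow> nat) \<Rightarrow> nat \<Rightarrow> 'a \<Rightarrow> real" where
  "GammaR s LR m w = (\<Sum>j=1..m. s (LR j w))"

definition GammaS :: "(nat \<Rightarrow> real) \<Rightarrow> (nat \<Rightarrow> 'a \<Rightarrow> nat) \<Rightarrow> nat \<Rightarrow> 'a \<Rightarrow> real" where
  "GammaS r LS m w = (\<Sum>j=1..m. r (LS j w))"

text \<open>The filtration F_n = F_0 \<or> sigma(L_R(1..R(n)), L_S(1..S(n))), where F_0 = sigma(U) for the
  randomization variable U taking values in the measurable space N.  The label prefixes read so far are
  encoded as sequences padded by 0 beyond the observed index (together with R(n)).\<close>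
definition obs :: "('a \<Rightarrow> 'b) \<Rightarrow> (nat \<Rightarrow> 'a \<Rightarrow> nat) \<Rightarrow> (nat \<Rightarrow> 'a \<Rightarrow> nat)
    \<Rightarrow> (nat \<Rightarrow> 'a \<Rightarrow> bool) \<Rightarrow> nat \<Rightarrow> 'a \<Rightarrow> 'b \<times> nat \<times> (nat \<Rightarrow> nat) \<times> (nat \<Rightarrow> nat)" where
  "obs U LR LS C n w =
     (U w, Rcount C n w,
      (\<lambda>k. if 1 \<le> k \<and> k \<le> Rcount C n w then LR k w else 0),
      (\<lambda>k. if 1 \<le> k \<and> k \<le> Scount C n w then LS k w else 0))"

definition filt :: "'a measure \<Rightarrow> 'b measure \<Rightarrow> ('a \<Rightarrow> 'b) \<Rightarrow> (nat \<Rightarrow> 'a \<Rightarrow> nat) \<Rightarrow> (nat \<Rightarrow> 'a \<Rightarrow> nat)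
    \<Rightarrow> (nat \<Rightarrow> 'a \<Rightarrow> bool) \<Rightarrow> nat \<Rightarrow> 'a measure" where
  "filt M N U LR LS C n =
     vimage_algebra (space M) (obs U LR LS C n)
       (N \<Otimes>\<^sub>M count_space UNIV \<Otimes>\<^sub>M
        (\<Pi>\<^sub>M k\<in>UNIV. count_space UNIV) \<Otimes>\<^sub>M (\<Pi>\<^sub>M k\<in>UNIV. count_space UNIV))"

end

theory Submission
  imports Defs "HOL-Real_Asymp.Real_Asymp"
begin
locale gsetup = prob_space M for M :: "'a measure" +
  fixes r s :: "nat \<Rightarrow> real" and LR LS :: "nat \<Rightarrow> 'a \<Rightarrow> nat"
  assumes r_nonneg: "\<And>i. r i \<ge> 0" and r_sum: "r sums 1"
    and s_nonneg: "\<And>i. s i \<ge> 0" and s_sum: "s sums 1"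
    and LR_rv: "\<And>n. n \<ge> 1 \<Longrightarrow> LR n \<in> measurable M (count_space UNIV)"
    and LS_rv: "\<And>n. n \<ge> 1 \<Longrightarrow> LS n \<in> measurable M (count_space UNIV)"
    and LR_dist: "\<And>n i. n \<ge> 1 \<Longrightarrow> measure M {w \<in> space M. LR n w = i} = r i"
    and LS_dist: "\<And>n i. n \<ge> 1 \<Longrightarrow> measure M {w \<in> space M. LS n w = i} = s i"
    and lab_indep: "indep_vars (\<lambda>_. count_space UNIV) (\<lambda>(b, n). if b then LR n else LS n) (UNIV \<times> {1..})"
begin

lemma r_le1: "r i \<le> 1"
proof -
  have "sum r {i} \<le> suminf r" using r_sum r_nonneg
    by (intro sum_le_suminf) (auto simp: sums_iff)
  then show ?thesis using r_sum by (simp add: sums_iff)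
qed

lemma s_le1: "s i \<le> 1"
proof -
  have "sum s {i} \<le> suminf s" using s_sum s_nonneg
    by (intro sum_le_suminf) (auto simp: sums_iff)
  then show ?thesis using s_sum by (simp add: sums_iff)
qed

lemma summable_rs: "summable (\<lambda>i. r i * s i)"
  by (rule summable_comparison_test[where g=r])
     (use r_sum r_nonneg s_nonneg s_le1 in \<open>auto simp: sums_iff intro!: exI[of _ 0] mult_left_le\<close>)

lemma expect_count:
  fixes X :: "'a \<Rightarrow> nat" and q h :: "nat \<Rightarrow> real"
  assumes X: "X \<in> measurable M (count_space UNIV)"
    and q: "\<And>i. prob {w\<in>space M. X w = i} = q i"
    and h: "\<And>i. 0 \<le> h i" "\<And>i. h i \<le> 1"
    and qs: "summable (\<lambda>i. h i * q i)"
  shows "expectation (\<lambda>w. h (X w)) = (\<Sum>i. h i * q i)"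
proof -
  have qn: "q i \<ge> 0" for i using q[of i] by (metis measure_nonneg)
  have D: "distr M (count_space UNIV) X = density (count_space UNIV) (\<lambda>i. ennreal (q i))"
  proof (rule measure_eqI_countable[where A=UNIV])
    fix a :: nat
    have "emeasure (distr M (count_space UNIV) X) {a} = emeasure M (X -` {a} \<inter> space M)"
      using X by (simp add: emeasure_distr)
    also have "X -` {a} \<inter> space M = {w\<in>space M. X w = a}" by auto
    also have "emeasure M \<dots> = ennreal (q a)" using q[of a] X
      by (simp add: emeasure_eq_measure)
    also have "\<dots> = emeasure (density (count_space UNIV) (\<lambda>i. ennreal (q i))) {a}"
      by (simp add: emeasure_density nn_integral_count_space_indicator)
    finally show "emeasure (distr M (count_space UNIV) X) {a} = emeasure (density (count_space UNIV) (\<lambda>i. ennreal (q i))) {a}" .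
  qed auto
  have "(\<integral>\<^sup>+ w. ennreal (h (X w)) \<partial>M) = (\<integral>\<^sup>+ i. ennreal (h i) \<partial>distr M (count_space UNIV) X)"
    using X by (simp add: nn_integral_distr)
  also have "\<dots> = (\<integral>\<^sup>+ i. ennreal (q i) * ennreal (h i) \<partial>count_space UNIV)"
    unfolding D by (simp add: nn_integral_density)
  also have "\<dots> = (\<Sum>i. ennreal (h i * q i))"
    by (simp add: nn_integral_count_space_nat ennreal_mult' h qn mult.commute)
  also have "\<dots> = ennreal (\<Sum>i. h i * q i)"
    using qs h qn by (intro suminf_ennreal2) auto
  finally have nn: "(\<integral>\<^sup>+ w. ennreal (h (X w)) \<partial>M) = ennreal (\<Sum>i. h i * q i)" .
  have "expectation (\<lambda>w. h (X w)) = enn2real (\<integral>\<^sup>+ w. ennreal (h (X w)) \<partial>M)"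
    using X h by (intro integral_eq_nn_integral) auto
  then show ?thesis using nn h qn qs by (simp add: suminf_nonneg)
qed

definition "Lb = (\<lambda>(b, n). if b then LR n else LS n)"
definition "mu = (\<Sum>i. r i * s i)"

lemma Lb_simps[simp]: "Lb (True, n) = LR n" "Lb (False, n) = LS n"
  by (auto simp: Lb_def)

lemma Lb_indep: "indep_vars (\<lambda>_. count_space UNIV) Lb (UNIV \<times> {1..})"
  using lab_indep unfolding Lb_def .

lemma ER: "n \<ge> 1 \<Longrightarrow> expectation (\<lambda>w. s (LR n w)) = mu"
  using expect_count[OF LR_rv LR_dist, of n s] s_nonneg s_le1 summable_rs
  by (simp add: mu_def mult.commute)

lemma ES: "n \<ge> 1 \<Longrightarrow> expectation (\<lambda>w. r (LS n w)) = mu"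
  using expect_count[OF LS_rv LS_dist, of n r] r_nonneg r_le1 summable_rs
  by (simp add: mu_def mult.commute)

lemma pair_prob:
  assumes n: "n \<ge> 1"
  shows "prob {w\<in>space M. LR n w = a \<and> LS n w = b} = r a * s b"
proof -
  let ?J = "{(True, n), (False, n)}"
  let ?A = "\<lambda>(c::bool, _::nat). if c then {a} else {b}"
  have "prob (\<Inter>i\<in>?J. Lb i -` ?A i \<inter> space M) = (\<Prod>i\<in>?J. prob (Lb i -` ?A i \<inter> space M))"
    using n by (intro indep_varsD[OF Lb_indep]) auto
  moreover have "(\<Inter>i\<in>?J. Lb i -` ?A i \<inter> space M) = {w\<in>space M. LR n w = a \<and> LS n w = b}"
    by auto
  moreover have "(\<Prod>i\<in>?J. prob (Lb i -` ?A i \<inter> space M)) = prob {w\<in>space M. LR n w = a} * prob {w\<in>space M. LS n w = b}"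
    by (simp add: vimage_def Int_def conj_commute)
  ultimately show ?thesis using LR_dist[OF n] LS_dist[OF n] by simp
qed

lemma pair_meas: "n \<ge> 1 \<Longrightarrow> (\<lambda>w. (LR n w, LS n w)) \<in> measurable M (count_space UNIV)"
proof -
  assume n: "n \<ge> 1"
  have "(\<lambda>w. (LR n w, LS n w)) \<in> measurable M (count_space UNIV \<Otimes>\<^sub>M count_space UNIV)"
    using LR_rv[OF n] LS_rv[OF n] by (rule measurable_Pair)
  then show ?thesis by (simp add: pair_measure_countable)
qed

lemma pair_distr:
  assumes n: "n \<ge> 1"
  shows "distr M (count_space UNIV) (\<lambda>w. (LR n w, LS n w)) = distr M (count_space UNIV) (\<lambda>w. (LR 1 w, LS 1 w))"
proof (rule measure_eqI_countable[where A=UNIV])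
  fix ab :: "nat \<times> nat"
  obtain a b where ab: "ab = (a, b)" by force
  have *: "emeasure (distr M (count_space UNIV) (\<lambda>w. (LR k w, LS k w))) {ab} = ennreal (r a * s b)" if k: "k \<ge> 1" for k
  proof -
    have "emeasure (distr M (count_space UNIV) (\<lambda>w. (LR k w, LS k w))) {ab} =
       emeasure M ((\<lambda>w. (LR k w, LS k w)) -` {ab} \<inter> space M)"
      using pair_meas[OF k] by (simp add: emeasure_distr)
    also have "(\<lambda>w. (LR k w, LS k w)) -` {ab} \<inter> space M = {w\<in>space M. LR k w = a \<and> LS k w = b}"
      using ab by auto
    also have "emeasure M \<dots> = ennreal (r a * s b)"
      using pair_prob[OF k, of a b] pair_meas[OF k] by (simp add: emeasure_eq_measure)
    finally show ?thesis .
  qed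
  show "emeasure (distr M (count_space UNIV) (\<lambda>w. (LR n w, LS n w))) {ab} =
        emeasure (distr M (count_space UNIV) (\<lambda>w. (LR 1 w, LS 1 w))) {ab}"
    using *[OF n] *[of 1] by simp
qed auto

lemma indep_pair_fun:
  assumes u: "u \<in> UNIV \<times> {1..}" and v: "v \<in> UNIV \<times> {1..}" and uv: "u \<noteq> v"
  shows "indep_var borel (\<lambda>w. g1 (Lb u w) :: real) borel (\<lambda>w. g2 (Lb v w) :: real)"
proof -
  have "indep_var (PiM {u} (\<lambda>_. count_space UNIV)) (\<lambda>\<omega>. restrict (\<lambda>i. Lb i \<omega>) {u})
                  (PiM {v} (\<lambda>_. count_space UNIV)) (\<lambda>\<omega>. restrict (\<lambda>i. Lb i \<omega>) {v})"
    using u v uv by (intro indep_var_restrict[OF Lb_indep]) auto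
  then have "indep_var borel ((\<lambda>f. g1 (f u)) \<circ> (\<lambda>\<omega>. restrict (\<lambda>i. Lb i \<omega>) {u}))
                  borel ((\<lambda>f. g2 (f v)) \<circ> (\<lambda>\<omega>. restrict (\<lambda>i. Lb i \<omega>) {v}))"
    by (rule indep_var_compose) (auto intro!: measurable_compose[OF measurable_component_singleton])
  then show ?thesis by (simp add: comp_def)
qed

definition "Y j w = r (LS (Suc j) w) - s (LR (Suc j) w)"

lemma Y_indep: "indep_vars (\<lambda>_. borel) Y UNIV"
proof -
  let ?K = "\<lambda>j::nat. {(True, Suc j), (False, Suc j)}"
  have "indep_vars (\<lambda>j. PiM (?K j) (\<lambda>_. count_space UNIV)) (\<lambda>j \<omega>. restrict (\<lambda>i. Lb i \<omega>) (?K j)) UNIV"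
    by (intro indep_vars_restrict[OF Lb_indep]) (auto simp: disjoint_family_on_def)
  then have "indep_vars (\<lambda>_. borel) (\<lambda>j \<omega>. (\<lambda>f. r (f (False, Suc j)) - s (f (True, Suc j))) (restrict (\<lambda>i. Lb i \<omega>) (?K j))) UNIV"
    by (rule indep_vars_compose2) measurable
  then show ?thesis by (simp add: Y_def[abs_def])
qed

lemma Y_meas[measurable]: "Y j \<in> borel_measurable M"
  using Y_indep unfolding indep_vars_def by auto

lemma Y_distr: "distr M borel (Y j) = distr M borel (Y 0)"
proof -
  have *: "distr M borel (Y j) = distr (distr M (count_space UNIV) (\<lambda>w. (LR (Suc j) w, LS (Suc j) w))) borel (\<lambda>(a, b). r b - s a)" for j
  proof -
    have "Y j = (\<lambda>w. r (LS (Suc j) w) - s (LR (Suc j) w))" by (simp add: Y_def[abs_def])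
    then show ?thesis by (subst distr_distr) (auto simp: pair_meas comp_def)
  qed
  show ?thesis unfolding * by (subst (1 2) pair_distr) auto
qed

lemma Y_bound: "\<bar>Y j w\<bar> \<le> 1"
  using r_nonneg[of "LS (Suc j) w"] s_nonneg[of "LR (Suc j) w"] r_le1[of "LS (Suc j) w"] s_le1[of "LR (Suc j) w"]
  by (auto simp: Y_def abs_le_iff)

lemma Y_int: "integrable M (Y j)"
  by (rule integrable_const_bound[where B=1]) (auto simp: Y_bound)

lemma Y_int2: "integrable M (\<lambda>w. (Y j w)\<^sup>2)"
proof (rule integrable_const_bound[where B=1])
  show "AE x in M. norm ((Y j x)\<^sup>2) \<le> 1"
    using Y_bound[of j] by (auto simp: abs_square_le_1)
qed auto

lemma E_Y: "expectation (Y j) = expectation (Y 0)"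
proof -
  have "expectation (Y j) = integral\<^sup>L (distr M borel (Y j)) (\<lambda>x. x)"
    by (simp add: integral_distr)
  also have "\<dots> = integral\<^sup>L (distr M borel (Y 0)) (\<lambda>x. x)" by (simp only: Y_distr[of j])
  also have "\<dots> = expectation (Y 0)" by (simp add: integral_distr)
  finally show ?thesis .
qed

lemma Var_Y: "variance (Y j) = variance (Y 0)"
proof -
  have "variance (Y j) = integral\<^sup>L (distr M borel (Y j)) (\<lambda>x. (x - expectation (Y 0))\<^sup>2)"
    by (simp add: integral_distr E_Y[of j])
  also have "\<dots> = integral\<^sup>L (distr M borel (Y 0)) (\<lambda>x. (x - expectation (Y 0))\<^sup>2)" by (simp only: Y_distr[of j])
  also have "\<dots> = variance (Y 0)" by (simp add: integral_distr)
  finally show ?thesis .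
qed

lemma meas_sLR[measurable]: "n \<ge> 1 \<Longrightarrow> (\<lambda>w. g (LR n w) :: real) \<in> borel_measurable M"
  by (rule measurable_compose[OF LR_rv]) auto

lemma meas_rLS[measurable]: "n \<ge> 1 \<Longrightarrow> (\<lambda>w. g (LS n w) :: real) \<in> borel_measurable M"
  by (rule measurable_compose[OF LS_rv]) auto

lemma int_bounded_LR: "n \<ge> 1 \<Longrightarrow> (\<And>i. \<bar>g i\<bar> \<le> B) \<Longrightarrow> integrable M (\<lambda>w. g (LR n w) :: real)"
  by (rule integrable_const_bound[where B=B]) (auto intro: meas_sLR)

lemma int_bounded_LS: "n \<ge> 1 \<Longrightarrow> (\<And>i. \<bar>g i\<bar> \<le> B) \<Longrightarrow> integrable M (\<lambda>w. g (LS n w) :: real)"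
  by (rule integrable_const_bound[where B=B]) (auto intro: meas_rLS)

lemma EY0: "expectation (Y 0) = 0"
proof -
  have i1: "integrable M (\<lambda>w. r (LS 1 w))"
    by (rule int_bounded_LS[where B=1]) (use r_nonneg r_le1 in \<open>auto simp: abs_le_iff\<close>)
  have i2: "integrable M (\<lambda>w. s (LR 1 w))"
    by (rule int_bounded_LR[where B=1]) (use s_nonneg s_le1 in \<open>auto simp: abs_le_iff\<close>)
  have "expectation (Y 0) = expectation (\<lambda>w. r (LS 1 w)) - expectation (\<lambda>w. s (LR 1 w))"
    unfolding Y_def using Bochner_Integration.integral_diff[OF i1 i2] by simp
  then show ?thesis using ER[of 1] ES[of 1] by simp
qed

lemma mu_ge0: "mu \<ge> 0"
  unfolding mu_def using r_nonneg s_nonneg by (intro suminf_nonneg summable_rs) auto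

lemma mu_le1: "mu \<le> 1"
proof -
  have "mu \<le> suminf r" unfolding mu_def
    using r_sum r_nonneg s_le1 summable_rs by (intro suminf_le) (auto simp: sums_iff intro: mult_left_le)
  then show ?thesis using r_sum by (simp add: sums_iff)
qed

lemma VarY0: "variance (Y 0) = variance (\<lambda>w. s (LR 1 w)) + variance (\<lambda>w. r (LS 1 w))"
proof -
  define A where "A w = r (LS 1 w) - mu" for w
  define B where "B w = s (LR 1 w) - mu" for w
  have bA: "\<bar>r i - mu\<bar> \<le> 1" for i using mu_ge0 mu_le1 r_nonneg[of i] r_le1[of i] by (auto simp: abs_le_iff)
  have bB: "\<bar>s i - mu\<bar> \<le> 1" for i using mu_ge0 mu_le1 s_nonneg[of i] s_le1[of i] by (auto simp: abs_le_iff)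
  have iA: "integrable M A" unfolding A_def by (rule int_bounded_LS[OF _ bA]) auto
  have iB: "integrable M B" unfolding B_def by (rule int_bounded_LR[OF _ bB]) auto
  have iA2: "integrable M (\<lambda>w. (A w)\<^sup>2)" unfolding A_def
    by (rule int_bounded_LS[where B=1]) (use bA in \<open>auto simp: abs_square_le_1\<close>)
  have iB2: "integrable M (\<lambda>w. (B w)\<^sup>2)" unfolding B_def
    by (rule int_bounded_LR[where B=1]) (use bB in \<open>auto simp: abs_square_le_1\<close>)
  have ind: "indep_var borel A borel B"
    unfolding A_def B_def using indep_pair_fun[of "(False, 1)" "(True, 1)" "\<lambda>i. r i - mu" "\<lambda>i. s i - mu"]
    by simp
  have EAB: "expectation (\<lambda>w. A w * B w) = 0"
  proof -
    have "expectation (\<lambda>w. A w * B w) = expectation A * expectation B"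
      by (rule indep_var_lebesgue_integral[OF ind iA iB])
    moreover have "expectation A = 0" unfolding A_def
      using ES[of 1] int_bounded_LS[where B=1 and g=r and n=1] r_nonneg r_le1 by (simp add: abs_le_iff prob_space)
    ultimately show ?thesis by simp
  qed
  have iAB: "integrable M (\<lambda>w. A w * B w)" by (rule indep_var_integrable[OF ind iA iB])
  have "Y 0 = (\<lambda>w. A w - B w)" by (auto simp: Y_def A_def B_def fun_eq_iff)
  then have "variance (Y 0) = expectation (\<lambda>w. (A w)\<^sup>2 + (B w)\<^sup>2 - 2 * (A w * B w))"
    using EY0 by (simp add: power2_diff mult.assoc)
  also have "\<dots> = expectation (\<lambda>w. (A w)\<^sup>2) + expectation (\<lambda>w. (B w)\<^sup>2) - 2 * expectation (\<lambda>w. A w * B w)"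
    using iA2 iB2 iAB by simp
  also have "expectation (\<lambda>w. (A w)\<^sup>2) = variance (\<lambda>w. r (LS 1 w))" using ES[of 1] by (simp add: A_def)
  also have "expectation (\<lambda>w. (B w)\<^sup>2) = variance (\<lambda>w. s (LR 1 w))" using ER[of 1] by (simp add: B_def)
  finally show ?thesis using EAB by simp
qed

lemma cdf_distr: "g \<in> borel_measurable M \<Longrightarrow> cdf (distr M borel g) t = prob {w\<in>space M. g w \<le> t}"
  unfolding cdf_def2 by (subst measure_distr) (auto intro!: arg_cong[where f=prob])

lemma clt:
  assumes v: "variance (Y 0) > 0"
  shows "(\<lambda>q. prob {w\<in>space M. (\<Sum>i<q. Y i w) / sqrt (real q * variance (Y 0)) \<le> t})
           \<longlonglongrightarrow> cdf std_normal_distribution t"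
proof -
  define v where "v = variance (Y 0)"
  have "weak_conv_m (\<lambda>n. distr M borel (\<lambda>x. (\<Sum>i<n. Y i x - 0) / sqrt (n * (sqrt v)\<^sup>2))) std_normal_distribution"
    unfolding v_def
  proof (rule central_limit_theorem[where \<mu>="distr M borel (Y 0)"])
    show "indep_vars (\<lambda>i. borel) Y UNIV" by (rule Y_indep)
    show "expectation (Y n) = 0" for n using E_Y[of n] EY0 by simp
    show "sqrt (variance (Y 0)) > 0" using v by simp
    show "integrable M (\<lambda>x. (Y n x)\<^sup>2)" for n by (rule Y_int2)
    show "variance (Y n) = (sqrt (variance (Y 0)))\<^sup>2" for n using Var_Y[of n] v by simp
    show "distr M borel (Y n) = distr M borel (Y 0)" for n by (rule Y_distr)
  qed
  moreover have "isCont (cdf std_normal_distribution) t"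
  proof -
    interpret std: real_distribution std_normal_distribution by (rule real_dist_normal_dist)
    have "emeasure std_normal_distribution {t} = 0"
      by (simp add: emeasure_density nn_integral_indicator_singleton)
    then show ?thesis by (simp add: std.isCont_cdf measure_def)
  qed
  ultimately have "(\<lambda>n. cdf (distr M borel (\<lambda>x. (\<Sum>i<n. Y i x - 0) / sqrt (n * (sqrt v)\<^sup>2))) t) \<longlonglongrightarrow> cdf std_normal_distribution t"
    unfolding weak_conv_m_def weak_conv_def by blast
  moreover have "(sqrt v)\<^sup>2 = v" using v v_def by simp
  ultimately show ?thesis unfolding v_def by (simp add: cdf_distr)
qed

definition "U a w = (if fst a then s (Lb a w) - mu else mu - r (Lb a w))"

lemma U_bound: "\<bar>U a w\<bar> \<le> 1"
  using mu_ge0 mu_le1 r_nonneg[of "Lb a w"] r_le1[of "Lb a w"] s_nonneg[of "Lb a w"] s_le1[of "Lb a w"]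
  by (auto simp: U_def abs_le_iff)

lemma U_as_fun: "U a = (\<lambda>w. (\<lambda>i. if fst a then s i - mu else mu - r i) (Lb a w))"
  by (auto simp: U_def fun_eq_iff)

lemma U_meas[measurable]: assumes "a \<in> UNIV \<times> {1..}" shows "U a \<in> borel_measurable M"
proof -
  have "Lb a \<in> measurable M (count_space UNIV)"
    using Lb_indep assms unfolding indep_vars_def by auto
  then show ?thesis unfolding U_as_fun by (rule measurable_compose) auto
qed

lemma U_int: "a \<in> UNIV \<times> {1..} \<Longrightarrow> integrable M (U a)"
  by (rule integrable_const_bound[where B=1]) (auto simp: U_bound)

lemma U_prod_int: "a \<in> UNIV \<times> {1..} \<Longrightarrow> b \<in> UNIV \<times> {1..} \<Longrightarrow> integrable M (\<lambda>w. U a w * U b w)"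
proof (rule integrable_const_bound[where B=1])
  show "AE x in M. norm (U a x * U b x) \<le> 1"
    using U_bound[of a] U_bound[of b] by (auto simp: abs_mult intro!: AE_I2 mult_le_one)
qed auto

lemma EU: assumes "a \<in> UNIV \<times> {1..}" shows "expectation (U a) = 0"
proof -
  obtain c n where a: "a = (c, n)" and n: "n \<ge> 1" using assms by auto
  have iR: "integrable M (\<lambda>w. s (LR n w))"
    by (rule int_bounded_LR[OF n, where B=1]) (use s_nonneg s_le1 in \<open>auto simp: abs_le_iff\<close>)
  have iS: "integrable M (\<lambda>w. r (LS n w))"
    by (rule int_bounded_LS[OF n, where B=1]) (use r_nonneg r_le1 in \<open>auto simp: abs_le_iff\<close>)
  show ?thesis
  proof (cases c)
    case True
    then have "U a = (\<lambda>w. s (LR n w) - mu)" by (auto simp: U_def a fun_eq_iff)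
    then show ?thesis using ER[OF n] iR by (simp add: prob_space)
  next
    case False
    then have "U a = (\<lambda>w. mu - r (LS n w))" by (auto simp: U_def a fun_eq_iff)
    then show ?thesis using ES[OF n] iS by (simp add: prob_space)
  qed
qed

lemma EUU: assumes "a \<in> UNIV \<times> {1..}" "b \<in> UNIV \<times> {1..}" "a \<noteq> b"
  shows "expectation (\<lambda>w. U a w * U b w) = 0"
proof -
  have "indep_var borel (U a) borel (U b)"
    unfolding U_as_fun by (rule indep_pair_fun[OF assms])
  then have "expectation (\<lambda>w. U a w * U b w) = expectation (U a) * expectation (U b)"
    using U_int assms by (intro indep_var_lebesgue_integral) auto
  then show ?thesis using EU assms by simp
qed

lemma sum_U_sq:
  assumes J: "finite J" "J \<subseteq> UNIV \<times> {1..}"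
  shows "expectation (\<lambda>w. (\<Sum>a\<in>J. U a w)\<^sup>2) \<le> card J"
proof -
  have pint: "\<And>a b. a \<in> J \<Longrightarrow> b \<in> J \<Longrightarrow> integrable M (\<lambda>w. U a w * U b w)"
    using J U_prod_int by blast
  have "expectation (\<lambda>w. (\<Sum>a\<in>J. U a w)\<^sup>2) = expectation (\<lambda>w. \<Sum>a\<in>J. \<Sum>b\<in>J. U a w * U b w)"
    by (simp add: power2_eq_square sum_product)
  also have "\<dots> = (\<Sum>a\<in>J. expectation (\<lambda>w. \<Sum>b\<in>J. U a w * U b w))"
    using pint by (intro Bochner_Integration.integral_sum Bochner_Integration.integrable_sum) auto
  also have "\<dots> = (\<Sum>a\<in>J. \<Sum>b\<in>J. expectation (\<lambda>w. U a w * U b w))"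
    using pint by (intro sum.cong refl Bochner_Integration.integral_sum) auto
  also have "\<dots> = (\<Sum>a\<in>J. expectation (\<lambda>w. U a w * U a w))"
  proof (rule sum.cong[OF refl])
    fix a assume a: "a \<in> J"
    have "(\<Sum>b\<in>J. expectation (\<lambda>w. U a w * U b w)) = (\<Sum>b\<in>J. if b = a then expectation (\<lambda>w. U a w * U a w) else 0)"
    proof (intro sum.cong refl)
      fix b assume b: "b \<in> J"
      show "expectation (\<lambda>w. U a w * U b w) = (if b = a then expectation (\<lambda>w. U a w * U a w) else 0)"
        using EUU[of a b] a b J(2) by (cases "b = a") auto
    qed
    also have "\<dots> = expectation (\<lambda>w. U a w * U a w)" using a J by simp
    finally show "(\<Sum>b\<in>J. expectation (\<lambda>w. U a w * U b w)) = expectation (\<lambda>w. U a w * U a w)" .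
  qed
  also have "\<dots> \<le> (\<Sum>a\<in>J. 1)"
  proof (rule sum_mono)
    fix a assume a: "a \<in> J"
    have "expectation (\<lambda>w. U a w * U a w) \<le> expectation (\<lambda>w. 1)"
      using a J U_bound[of a] pint[OF a a] by (intro integral_mono) (auto simp: abs_square_le_1 simp flip: power2_eq_square)
    then show "expectation (\<lambda>w. U a w * U a w) \<le> 1" by (simp add: prob_space)
  qed
  finally show ?thesis by simp
qed

lemma sum_U_tail:
  assumes J: "finite J" "J \<subseteq> UNIV \<times> {1..}" and c: "c > 0"
  shows "prob {w\<in>space M. \<bar>\<Sum>a\<in>J. U a w\<bar> \<ge> c} \<le> card J / c\<^sup>2"
proof -
  have int: "integrable M (\<lambda>w. (\<Sum>a\<in>J. U a w)\<^sup>2)"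
  proof -
    have pint: "\<And>a b. a \<in> J \<Longrightarrow> b \<in> J \<Longrightarrow> integrable M (\<lambda>w. U a w * U b w)"
      using J U_prod_int by blast
    then show ?thesis by (simp add: power2_eq_square sum_product)
  qed
  have "prob {w\<in>space M. \<bar>\<Sum>a\<in>J. U a w\<bar> \<ge> c} = prob {w\<in>space M. (\<Sum>a\<in>J. U a w)\<^sup>2 \<ge> c\<^sup>2}"
    using c by (intro arg_cong[where f=prob]) (auto simp: abs_le_square_iff[symmetric] abs_of_pos)
  also have "\<dots> \<le> expectation (\<lambda>w. (\<Sum>a\<in>J. U a w)\<^sup>2) / c\<^sup>2"
    using c int by (intro integral_Markov_inequality_measure[where A="space M"]) auto
  also have "\<dots> \<le> card J / c\<^sup>2"
    using sum_U_sq[OF J] c by (simp add: divide_right_mono)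
  finally show ?thesis .
qed

end

lemma (in prob_space) slutsky_sandwich:
  fixes Z W :: "nat \<Rightarrow> 'a \<Rightarrow> real" and F :: "real \<Rightarrow> real" and a :: "nat \<Rightarrow> real"
  assumes Zm: "\<And>n. Z n \<in> borel_measurable M" and Wm: "\<And>n. W n \<in> borel_measurable M"
    and conv: "\<And>t. (\<lambda>n. prob {x\<in>space M. Z n x \<le> t}) \<longlonglongrightarrow> F t"
    and cont: "isCont F w"
    and Wconv: "\<And>e. e > 0 \<Longrightarrow> (\<lambda>n. prob {x\<in>space M. e \<le> \<bar>W n x - w\<bar>}) \<longlonglongrightarrow> 0"
    and sand: "eventually (\<lambda>n. prob {x\<in>space M. Z n x < W n x} \<le> a n \<and> a n \<le> prob {x\<in>space M. Z n x \<le> W n x}) sequentially"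
  shows "a \<longlonglongrightarrow> F w"
proof (rule tendstoI)
  fix d :: real assume d: "d > 0"
  obtain s where s: "s > 0" and sF: "\<And>y. y \<noteq> w \<Longrightarrow> norm (y - w) < s \<Longrightarrow> norm (F y - F w) < d / 3"
    using LIM_D[OF cont[unfolded isCont_def], of "d/3"] d by auto
  define e where "e = s / 2"
  have e: "e > 0" "e < s" using s by (auto simp: e_def)
  have F1: "F (w + e) < F w + d / 3" proof -
    have "norm (F (w + e) - F w) < d / 3" using sF[of "w + e"] e by auto
    then show ?thesis unfolding real_norm_def abs_less_iff by linarith
  qed
  have F2: "F (w - e) > F w - d / 3" proof -
    have "norm (F (w - e) - F w) < d / 3" using sF[of "w - e"] e by auto
    then show ?thesis unfolding real_norm_def abs_less_iff by linarith
  qed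
  have ev1: "eventually (\<lambda>n. prob {x\<in>space M. Z n x \<le> w + e} < F (w + e) + d / 3) sequentially"
    using order_tendstoD(2)[OF conv[of "w + e"], of "F (w + e) + d / 3"] d by auto
  have ev2: "eventually (\<lambda>n. prob {x\<in>space M. Z n x \<le> w - e} > F (w - e) - d / 3) sequentially"
    using order_tendstoD(1)[OF conv[of "w - e"], of "F (w - e) - d / 3"] d by auto
  have ev3: "eventually (\<lambda>n. prob {x\<in>space M. e \<le> \<bar>W n x - w\<bar>} < d / 3) sequentially"
    using order_tendstoD(2)[OF Wconv[OF e(1)], of "d / 3"] d by auto
  show "eventually (\<lambda>n. dist (a n) (F w) < d) sequentially"
    using ev1 ev2 ev3 sand
  proof eventually_elim
    case (elim n)
    let ?B = "{x\<in>space M. e \<le> \<bar>W n x - w\<bar>}"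
    have mZ: "Z n \<in> borel_measurable M" and mW: "W n \<in> borel_measurable M" using Zm Wm by auto
    have sB: "?B \<in> sets M" using mW by measurable
    have up: "prob {x\<in>space M. Z n x \<le> W n x} \<le> prob {x\<in>space M. Z n x \<le> w + e} + prob ?B"
    proof -
      have "prob {x\<in>space M. Z n x \<le> W n x} \<le> prob ({x\<in>space M. Z n x \<le> w + e} \<union> ?B)"
        using mZ mW by (intro finite_measure_mono) (auto, measurable)
      also have "\<dots> \<le> prob {x\<in>space M. Z n x \<le> w + e} + prob ?B"
        using mZ mW by (intro measure_Un_le sB) measurable
      finally show ?thesis .
    qed
    have lo: "prob {x\<in>space M. Z n x \<le> w - e} \<le> prob {x\<in>space M. Z n x < W n x} + prob ?B"
    proof -
      have "prob {x\<in>space M. Z n x \<le> w - e} \<le> prob ({x\<in>space M. Z n x < W n x} \<union> ?B)"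
        using mZ mW by (intro finite_measure_mono) (auto, measurable)
      also have "\<dots> \<le> prob {x\<in>space M. Z n x < W n x} + prob ?B"
        using mZ mW by (intro measure_Un_le sB) measurable
      finally show ?thesis .
    qed
    show ?case using elim up lo F1 F2 by (auto simp: dist_real_def abs_less_iff)
  qed
qed

lemma Rcount_0[simp]: "Rcount C 0 w = 0"
  by (simp add: Rcount_def)

lemma Rcount_Suc: "Rcount C (Suc n) w = Rcount C n w + (if C (Suc n) w then 1 else 0)"
proof -
  have "{j \<in> {1..Suc n}. C j w} = (if C (Suc n) w then insert (Suc n) {j \<in> {1..n}. C j w} else {j \<in> {1..n}. C j w})"
    by (auto simp: le_Suc_eq)
  then show ?thesis by (simp add: Rcount_def)
qed

lemma Rcount_le: "Rcount C n w \<le> n"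
proof -
  have "card {j \<in> {1..n}. C j w} \<le> card {1..n}" by (intro card_mono) auto
  then show ?thesis by (simp add: Rcount_def)
qed

lemma Rcount_meas:
  assumes "\<And>j. 1 \<le> j \<Longrightarrow> j \<le> n \<Longrightarrow> C j \<in> measurable M (count_space UNIV)"
  shows "Rcount C n \<in> measurable M (count_space UNIV)"
  using assms
proof (induction n)
  case 0
  then show ?case by simp
next
  case (Suc n)
  have IH: "Rcount C n \<in> measurable M (count_space UNIV)" using Suc by auto
  have CS: "C (Suc n) \<in> measurable M (count_space UNIV)" using Suc.prems by auto
  have "(\<lambda>w. (\<lambda>i w. i + (if C (Suc n) w then 1 else 0)) (Rcount C n w) w) \<in> measurable M (count_space UNIV)"
  proof (rule measurable_compose_countable[OF _ IH])
    fix i :: nat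
    note CS[measurable]
    show "(\<lambda>x. i + (if C (Suc n) x then 1 else 0)) \<in> measurable M (count_space UNIV)"
      by measurable
  qed
  then show ?case by (simp add: Rcount_Suc[abs_def])
qed

lemma C_meas:
  assumes U_rv: "U \<in> measurable M N"
    and LR_rv: "\<And>n. n \<ge> 1 \<Longrightarrow> LR n \<in> measurable M (count_space UNIV)"
    and LS_rv: "\<And>n. n \<ge> 1 \<Longrightarrow> LS n \<in> measurable M (count_space UNIV)"
    and policy: "\<And>n. C (Suc n) \<in> measurable (filt M N U LR LS C n) (count_space UNIV)"
  shows "\<forall>j. 1 \<le> j \<longrightarrow> j \<le> n \<longrightarrow> C j \<in> measurable M (count_space UNIV)"
proof (induction n)
  case 0
  then show ?case by simp
next
  case (Suc n)
  have R: "Rcount C n \<in> measurable M (count_space UNIV)"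
    using Suc by (intro Rcount_meas) auto
  have Sc: "Scount C n \<in> measurable M (count_space UNIV)"
    unfolding Scount_def[abs_def] by (rule measurable_compose[OF R]) auto
  have seq: "(\<lambda>w k. if 1 \<le> k \<and> k \<le> g w then L k w else 0) \<in> measurable M (Pi\<^sub>M UNIV (\<lambda>k. count_space UNIV))"
    if g: "g \<in> measurable M (count_space UNIV)" and L: "\<And>n. n \<ge> 1 \<Longrightarrow> L n \<in> measurable M (count_space UNIV)"
    for g :: "'a \<Rightarrow> nat" and L
  proof (rule measurable_PiM_single')
    fix k :: nat
    show "(\<lambda>w. if 1 \<le> k \<and> k \<le> g w then L k w else 0) \<in> measurable M (count_space UNIV)"
    proof (cases "k \<ge> 1")
      case True
      have "(\<lambda>w. (\<lambda>i w. if 1 \<le> k \<and> k \<le> i then L k w else 0) (g w) w) \<in> measurable M (count_space UNIV)"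
        by (rule measurable_compose_countable[OF _ g]) (use L[OF True] in auto)
      then show ?thesis by simp
    next
      case False
      then show ?thesis by simp
    qed
  qed auto
  have obs: "obs U LR LS C n \<in> measurable M (N \<Otimes>\<^sub>M count_space UNIV \<Otimes>\<^sub>M
        (\<Pi>\<^sub>M k\<in>UNIV. count_space UNIV) \<Otimes>\<^sub>M (\<Pi>\<^sub>M k\<in>UNIV. count_space UNIV))"
    unfolding obs_def[abs_def]
    by (intro measurable_Pair U_rv R seq[OF R LR_rv] seq[OF Sc LS_rv]) auto
  have "id \<in> measurable M (filt M N U LR LS C n)"
    unfolding filt_def by (rule measurable_vimage_algebra2) (use obs in auto)
  then have "C (Suc n) \<circ> id \<in> measurable M (count_space UNIV)"
    using policy[of n] by (rule measurable_comp)
  then have "C (Suc n) \<in> measurable M (count_space UNIV)" by simp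
  then show ?case using Suc by (auto simp: le_Suc_eq)
qed

lemma GammaR_mono: "(\<And>i. s i \<ge> 0) \<Longrightarrow> a \<le> b \<Longrightarrow> GammaR s LR a w \<le> GammaR s LR b w"
  unfolding GammaR_def by (intro sum_mono2) auto

lemma GammaS_mono: "(\<And>i. r i \<ge> 0) \<Longrightarrow> a \<le> b \<Longrightarrow> GammaS r LS a w \<le> GammaS r LS b w"
  unfolding GammaS_def by (intro sum_mono2) auto

lemma GammaR_nonneg: "(\<And>i. s i \<ge> 0) \<Longrightarrow> 0 \<le> GammaR s LR a w"
  unfolding GammaR_def by (intro sum_nonneg) auto

lemma GammaS_nonneg: "(\<And>i. r i \<ge> 0) \<Longrightarrow> 0 \<le> GammaS r LS a w"
  unfolding GammaS_def by (intro sum_nonneg) auto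

lemma greedy_inv:
  assumes r: "\<And>i. r i \<ge> 0" and s: "\<And>i. s i \<ge> 0"
    and gR: "\<And>n. n \<ge> 1 \<Longrightarrow> GammaS r LS (Scount C n w) w > GammaR s LR (Rcount C n w) w \<Longrightarrow> C (Suc n) w"
    and gS: "\<And>n. n \<ge> 1 \<Longrightarrow> GammaS r LS (Scount C n w) w < GammaR s LR (Rcount C n w) w \<Longrightarrow> \<not> C (Suc n) w"
  shows "(1 \<le> Scount C n w \<longrightarrow> GammaS r LS (Scount C n w - 1) w \<le> GammaR s LR (Rcount C n w) w) \<and>
         (1 \<le> Rcount C n w \<longrightarrow> GammaR s LR (Rcount C n w - 1) w \<le> GammaS r LS (Scount C n w) w)"
proof (induction n)
  case 0
  then show ?case by (simp add: Scount_def)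
next
  case (Suc n)
  have Rle: "Rcount C n w \<le> n" by (rule Rcount_le)
  show ?case
  proof (cases "n = 0")
    case True
    then show ?thesis using GammaR_nonneg[OF s] GammaS_nonneg[OF r]
      by (auto simp: Rcount_Suc Scount_def GammaR_def GammaS_def)
  next
    case False
    then have n1: "n \<ge> 1" by simp
    show ?thesis
    proof (cases "C (Suc n) w")
      case True
      then have R': "Rcount C (Suc n) w = Rcount C n w + 1" and S': "Scount C (Suc n) w = Scount C n w"
        using Rle by (auto simp: Rcount_Suc Scount_def)
      have "\<not> GammaS r LS (Scount C n w) w < GammaR s LR (Rcount C n w) w" using gS[OF n1] True by blast
      then show ?thesis using Suc.IH R' S' GammaR_mono[where s=s and a="Rcount C n w" and b="Rcount C n w + 1" and LR=LR and w=w, OF s]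
        by auto
    next
      case False
      then have R': "Rcount C (Suc n) w = Rcount C n w" and S': "Scount C (Suc n) w = Scount C n w + 1"
        using Rle by (auto simp: Rcount_Suc Scount_def)
      have "\<not> GammaS r LS (Scount C n w) w > GammaR s LR (Rcount C n w) w" using gR[OF n1] False by blast
      then show ?thesis using Suc.IH R' S' GammaS_mono[where r=r and a="Scount C n w" and b="Scount C n w + 1" and LS=LS and w=w, OF r]
        by auto
    qed
  qed
qed

lemma greedy_sandwich:
  assumes r: "\<And>i. r i \<ge> 0" and s: "\<And>i. s i \<ge> 0"
    and gR: "\<And>n. n \<ge> 1 \<Longrightarrow> GammaS r LS (Scount C n w) w > GammaR s LR (Rcount C n w) w \<Longrightarrow> C (Suc n) w"
    and gS: "\<And>n. n \<ge> 1 \<Longrightarrow> GammaS r LS (Scount C n w) w < GammaR s LR (Rcount C n w) w \<Longrightarrow> \<not> C (Suc n) w"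
    and k: "k < n"
  shows "Rcount C n w \<le> k \<Longrightarrow> GammaS r LS (n - 1 - k) w \<le> GammaR s LR k w"
    and "\<not> Rcount C n w \<le> k \<Longrightarrow> GammaR s LR k w \<le> GammaS r LS (n - 1 - k) w"
proof -
  note inv = greedy_inv[where r=r and s=s and LR=LR and LS=LS and C=C and w=w and n=n, OF r s gR gS]
  have Rle: "Rcount C n w \<le> n" by (rule Rcount_le)
  {
    assume R: "Rcount C n w \<le> k"
    then have S1: "1 \<le> Scount C n w" using k by (simp add: Scount_def)
    have "GammaS r LS (n - 1 - k) w \<le> GammaS r LS (Scount C n w - 1) w"
      using R k by (intro GammaS_mono[OF r]) (simp add: Scount_def)
    also have "\<dots> \<le> GammaR s LR (Rcount C n w) w" using inv S1 by blast
    also have "\<dots> \<le> GammaR s LR k w" using R by (intro GammaR_mono[OF s])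
    finally show "GammaS r LS (n - 1 - k) w \<le> GammaR s LR k w" .
  }
  {
    assume R: "\<not> Rcount C n w \<le> k"
    then have R1: "1 \<le> Rcount C n w" by simp
    have "GammaR s LR k w \<le> GammaR s LR (Rcount C n w - 1) w"
      using R by (intro GammaR_mono[OF s]) simp
    also have "\<dots> \<le> GammaS r LS (Scount C n w) w" using inv R1 by blast
    also have "\<dots> \<le> GammaS r LS (n - 1 - k) w"
      using R Rle by (intro GammaS_mono[OF r]) (simp add: Scount_def)
    finally show "GammaR s LR k w \<le> GammaS r LS (n - 1 - k) w" .
  }
qed

lemma eventually_big: "eventually (\<lambda>n. \<bar>x\<bar> * sqrt (real n) + 4 \<le> real n / 4) sequentially"
proof -
  have "eventually (\<lambda>n. real n \<ge> (4 * \<bar>x\<bar> + 4)\<^sup>2) sequentially"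
    by real_asymp
  then show ?thesis
  proof eventually_elim
    case (elim n)
    have sq: "sqrt (real n) \<ge> 4 * \<bar>x\<bar> + 4"
      using real_sqrt_le_mono[OF elim] by simp
    have "real n = sqrt (real n) * sqrt (real n)" by simp
    also have "\<dots> \<ge> (4 * \<bar>x\<bar> + 4) * sqrt (real n)"
      using sq by (intro mult_right_mono) auto
    finally have "real n \<ge> 4 * \<bar>x\<bar> * sqrt (real n) + 4 * sqrt (real n)" by (simp add: algebra_simps)
    moreover have "4 * sqrt (real n) \<ge> 16" using sq by (smt (verit) abs_ge_zero)
    ultimately show ?case by simp
  qed
qed

definition kf :: "real \<Rightarrow> nat \<Rightarrow> nat" where "kf x n = nat \<lfloor>real n / 2 + x * sqrt (real n)\<rfloor>"

lemma kf_bounds: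
  assumes big: "\<bar>x\<bar> * sqrt (real n) + 4 \<le> real n / 4"
  shows "real (kf x n) \<le> real n / 2 + x * sqrt (real n)"
    and "real (kf x n) > real n / 2 + x * sqrt (real n) - 1"
    and "real (kf x n) \<ge> real n / 4 + 3"
    and "real n - 1 - real (kf x n) \<ge> real n / 4 + 3"
    and "kf x n < n"
proof -
  have xs: "- (\<bar>x\<bar> * sqrt (real n)) \<le> x * sqrt (real n)" "x * sqrt (real n) \<le> \<bar>x\<bar> * sqrt (real n)"
    by (auto simp: abs_if mult_nonneg_nonneg mult_nonpos_nonneg)
  have pos: "real n / 2 + x * sqrt (real n) \<ge> 0" using big xs by linarith
  have fl: "real_of_int \<lfloor>real n / 2 + x * sqrt (real n)\<rfloor> \<le> real n / 2 + x * sqrt (real n)"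
           "real_of_int \<lfloor>real n / 2 + x * sqrt (real n)\<rfloor> > real n / 2 + x * sqrt (real n) - 1"
    by linarith+
  have k: "real (kf x n) = real_of_int \<lfloor>real n / 2 + x * sqrt (real n)\<rfloor>"
    unfolding kf_def using pos by simp
  show "real (kf x n) \<le> real n / 2 + x * sqrt (real n)" using k fl by simp
  show "real (kf x n) > real n / 2 + x * sqrt (real n) - 1" using k fl by simp
  show "real (kf x n) \<ge> real n / 4 + 3" using k fl big xs by linarith
  show "real n - 1 - real (kf x n) \<ge> real n / 4 + 3" using k fl big xs by linarith
  then show "kf x n < n" by linarith
qed

definition mf :: "real \<Rightarrow> nat \<Rightarrow> nat" where "mf x n = n - 1 - kf x n"
definition pf :: "real \<Rightarrow> nat \<Rightarrow> nat" where "pf x n = min (kf x n) (mf x n)"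

lemma kmp_bounds:
  assumes big: "\<bar>x\<bar> * sqrt (real n) + 4 \<le> real n / 4"
  shows "real (mf x n) = real n - 1 - real (kf x n)"
    and "\<bar>(real (kf x n) - real (mf x n)) - 2 * x * sqrt (real n)\<bar> \<le> 1"
    and "real (pf x n) \<ge> real n / 4 + 3"
    and "real (pf x n) = (real n - 1 - \<bar>real (kf x n) - real (mf x n)\<bar>) / 2"
    and "\<bar>real (kf x n) - real (mf x n)\<bar> \<le> 2 * \<bar>x\<bar> * sqrt (real n) + 1"
proof -
  note kb = kf_bounds[OF big]
  show m: "real (mf x n) = real n - 1 - real (kf x n)"
    using kb(5) unfolding mf_def by (simp add: of_nat_diff)
  show d: "\<bar>(real (kf x n) - real (mf x n)) - 2 * x * sqrt (real n)\<bar> \<le> 1"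
    using m kb(1,2) by (simp add: abs_le_iff) 
  show "real (pf x n) \<ge> real n / 4 + 3"
    using m kb(3,4) unfolding pf_def by (simp add: of_nat_min)
  show "real (pf x n) = (real n - 1 - \<bar>real (kf x n) - real (mf x n)\<bar>) / 2"
    using m unfolding pf_def by (simp add: of_nat_min min_def abs_if)
  have xs: "x * sqrt (real n) \<le> \<bar>x\<bar> * sqrt (real n)" "- (\<bar>x\<bar> * sqrt (real n)) \<le> x * sqrt (real n)"
    by (auto simp: abs_if mult_nonneg_nonneg mult_nonpos_nonneg)
  show "\<bar>real (kf x n) - real (mf x n)\<bar> \<le> 2 * \<bar>x\<bar> * sqrt (real n) + 1"
    using d xs by (simp add: abs_le_iff) 
qed

lemma lim_inv_sqrt: "(\<lambda>n. 1 / sqrt (real n)) \<longlonglongrightarrow> 0" by real_asymp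
lemma lim_sqrt_div: "(\<lambda>n. sqrt (real n) / real n) \<longlonglongrightarrow> 0" by real_asymp
lemma lim_inv: "(\<lambda>n. 1 / real n) \<longlonglongrightarrow> 0" by real_asymp

lemma limA: "(\<lambda>n. (real (kf x n) - real (mf x n)) / sqrt (real n)) \<longlonglongrightarrow> 2 * x"
proof (rule LIM_zero_cancel, rule Lim_null_comparison[OF _ lim_inv_sqrt])
  show "eventually (\<lambda>n. norm ((real (kf x n) - real (mf x n)) / sqrt (real n) - 2 * x) \<le> 1 / sqrt (real n)) sequentially"
    using eventually_big[of x] eventually_gt_at_top[of 0]
  proof eventually_elim
    case (elim n)
    have sp: "sqrt (real n) > 0" using elim by simp
    have "(real (kf x n) - real (mf x n)) / sqrt (real n) - 2 * x =
          ((real (kf x n) - real (mf x n)) - 2 * x * sqrt (real n)) / sqrt (real n)"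
      using sp by (simp add: field_simps)
    moreover have "\<bar>((real (kf x n) - real (mf x n)) - 2 * x * sqrt (real n)) / sqrt (real n)\<bar> \<le> 1 / sqrt (real n)"
      unfolding abs_divide using kmp_bounds(2)[OF elim(1)] sp
      by (simp only: abs_of_pos[OF sp]) (intro divide_right_mono, auto)
    ultimately show ?case by (simp only: real_norm_def)
  qed
qed

lemma limB: "(\<lambda>n. real (pf x n) / real n) \<longlonglongrightarrow> 1 / 2"
proof (rule LIM_zero_cancel, rule Lim_null_comparison)
  show "(\<lambda>n. \<bar>x\<bar> * (sqrt (real n) / real n) + 1 / real n) \<longlonglongrightarrow> 0"
    using tendsto_add[OF tendsto_mult[OF tendsto_const lim_sqrt_div] lim_inv] by simp
  show "eventually (\<lambda>n. norm (real (pf x n) / real n - 1 / 2) \<le> \<bar>x\<bar> * (sqrt (real n) / real n) + 1 / real n) sequentially"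
    using eventually_big[of x] eventually_gt_at_top[of 0]
  proof eventually_elim
    case (elim n)
    have np: "real n > 0" using elim by simp
    have "real (pf x n) / real n - 1 / 2 = (- 1 - \<bar>real (kf x n) - real (mf x n)\<bar>) / (2 * real n)"
      using kmp_bounds(4)[OF elim(1)] np by (simp add: field_simps)
    moreover have "\<bar>(- 1 - \<bar>real (kf x n) - real (mf x n)\<bar>) / (2 * real n)\<bar> \<le> (2 * \<bar>x\<bar> * sqrt (real n) + 2) / (2 * real n)"
      unfolding abs_divide using kmp_bounds(5)[OF elim(1)] np
      by (simp only: abs_of_pos[of "2 * real n"]) (intro divide_right_mono, auto)
    moreover have "(2 * \<bar>x\<bar> * sqrt (real n) + 2) / (2 * real n) = \<bar>x\<bar> * (sqrt (real n) / real n) + 1 / real n"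
      using np by (simp add: field_simps)
    ultimately show ?case by simp
  qed
qed

lemma limC: "(\<lambda>n. \<bar>real (kf x n) - real (mf x n)\<bar> / real (pf x n)) \<longlonglongrightarrow> 0"
proof (rule Lim_null_comparison)
  show "(\<lambda>n. 8 * \<bar>x\<bar> * (sqrt (real n) / real n) + 4 * (1 / real n)) \<longlonglongrightarrow> 0"
    using tendsto_add[OF tendsto_mult[OF tendsto_const lim_sqrt_div] tendsto_mult[OF tendsto_const lim_inv]] by simp
  show "eventually (\<lambda>n. norm (\<bar>real (kf x n) - real (mf x n)\<bar> / real (pf x n)) \<le> 8 * \<bar>x\<bar> * (sqrt (real n) / real n) + 4 * (1 / real n)) sequentially"
    using eventually_big[of x] eventually_gt_at_top[of 0]
  proof eventually_elim
    case (elim n)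
    have np: "real n > 0" using elim by simp
    have pp: "real (pf x n) \<ge> real n / 4" using kmp_bounds(3)[OF elim(1)] by simp
    have ppos: "real (pf x n) > 0" using pp np by simp
    have "\<bar>real (kf x n) - real (mf x n)\<bar> / real (pf x n) \<le> (2 * \<bar>x\<bar> * sqrt (real n) + 1) / real (pf x n)"
      using kmp_bounds(5)[OF elim(1)] ppos by (simp add: divide_right_mono)
    also have "\<dots> \<le> (2 * \<bar>x\<bar> * sqrt (real n) + 1) / (real n / 4)"
      using pp np by (intro divide_left_mono) auto
    also have "\<dots> = 8 * \<bar>x\<bar> * (sqrt (real n) / real n) + 4 * (1 / real n)"
      using np by (simp add: field_simps)
    finally show ?case by simp
  qed
qed

lemma pf_at_top: "filterlim (pf x) at_top sequentially"
  unfolding filterlim_at_top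
proof
  fix Z :: nat
  show "eventually (\<lambda>n. Z \<le> pf x n) sequentially"
    using eventually_big[of x] eventually_ge_at_top[of "4 * Z"]
  proof eventually_elim
    case (elim n)
    have "real (pf x n) \<ge> real n / 4" using kmp_bounds(3)[OF elim(1)] by simp
    moreover have "real n \<ge> 4 * real Z" using elim(2) by linarith
    ultimately show ?case by linarith
  qed
qed

lemma limc:
  assumes v: "v > 0"
  shows "(\<lambda>n. mu * (real (kf x n) - real (mf x n)) / sqrt (real (pf x n) * v)) \<longlonglongrightarrow> mu * (2 * x) / sqrt (1 / 2 * v)"
proof -
  have "(\<lambda>n. mu * ((real (kf x n) - real (mf x n)) / sqrt (real n)) / sqrt (real (pf x n) / real n * v))
          \<longlonglongrightarrow> mu * (2 * x) / sqrt (1 / 2 * v)"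
    using v by (intro tendsto_intros limA limB) auto
  moreover have "eventually (\<lambda>n. mu * ((real (kf x n) - real (mf x n)) / sqrt (real n)) / sqrt (real (pf x n) / real n * v)
           = mu * (real (kf x n) - real (mf x n)) / sqrt (real (pf x n) * v)) sequentially"
    using eventually_gt_at_top[of 0]
  proof eventually_elim
    case (elim n)
    have "sqrt (real (pf x n) * v) = sqrt (real n) * sqrt (real (pf x n) / real n * v)"
      using elim by (simp add: real_sqrt_mult[symmetric])
    then show ?case using elim by simp
  qed
  ultimately show ?thesis by (rule Lim_transform_eventually)
qed

context gsetup begin

lemma sum_split_at: fixes p k :: nat shows "p \<le> k \<Longrightarrow> (\<Sum>j=1..k. f j) = (\<Sum>j=1..p. f j) + (\<Sum>j=p+1..k. (f j :: real))"
proof -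
  assume pk: "p \<le> k"
  have "{1..k} = {1..p} \<union> {p+1..k}" using pk by auto
  then show ?thesis by (simp add: sum.union_disjoint[symmetric] ivl_disj_int)
qed

lemma key_identity:
  assumes pk: "p \<le> k" and pm: "p \<le> m"
  shows "GammaR s LR k w - GammaS r LS m w =
    - (\<Sum>i<p. Y i w) + mu * (real k - real m) +
      (\<Sum>a\<in>(\<lambda>j. (True, j)) ` {p+1..k} \<union> (\<lambda>j. (False, j)) ` {p+1..m}. U a w)"
proof -
  have disj: "(\<lambda>j. (True, j)) ` {p+1..k} \<inter> (\<lambda>j. (False, j)) ` {p+1..m} = {}" by auto
  have "(\<Sum>a\<in>(\<lambda>j. (True, j)) ` {p+1..k} \<union> (\<lambda>j. (False, j)) ` {p+1..m}. U a w) =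
        (\<Sum>a\<in>(\<lambda>j. (True, j)) ` {p+1..k}. U a w) + (\<Sum>a\<in>(\<lambda>j. (False, j)) ` {p+1..m}. U a w)"
    by (rule sum.union_disjoint) (use disj in auto)
  also have "(\<Sum>a\<in>(\<lambda>j. (True, j)) ` {p+1..k}. U a w) = (\<Sum>j=p+1..k. s (LR j w) - mu)"
    by (subst sum.reindex) (auto simp: inj_on_def U_def)
  also have "\<dots> = (\<Sum>j=p+1..k. s (LR j w)) - real (k - p) * mu"
    by (simp add: sum_subtractf)
  also have "(\<Sum>a\<in>(\<lambda>j. (False, j)) ` {p+1..m}. U a w) = (\<Sum>j=p+1..m. mu - r (LS j w))"
    by (subst sum.reindex) (auto simp: inj_on_def U_def)
  also have "\<dots> = real (m - p) * mu - (\<Sum>j=p+1..m. r (LS j w))"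
    by (simp add: sum_subtractf)
  finally have T: "(\<Sum>a\<in>(\<lambda>j. (True, j)) ` {p+1..k} \<union> (\<lambda>j. (False, j)) ` {p+1..m}. U a w) =
     (\<Sum>j=p+1..k. s (LR j w)) - real (k - p) * mu + (real (m - p) * mu - (\<Sum>j=p+1..m. r (LS j w)))" .
  have Ysum: "(\<Sum>i<p. Y i w) = (\<Sum>j=1..p. r (LS j w)) - (\<Sum>j=1..p. s (LR j w))"
    using sum.atLeast1_atMost_eq[of "\<lambda>j. r (LS j w)" p] sum.atLeast1_atMost_eq[of "\<lambda>j. s (LR j w)" p]
    by (simp add: Y_def sum_subtractf)
  show ?thesis
    unfolding T Ysum GammaR_def GammaS_def
    using sum_split_at[OF pk, of "\<lambda>j. s (LR j w)"] sum_split_at[OF pm, of "\<lambda>j. r (LS j w)"] pk pm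
    by (simp add: of_nat_diff algebra_simps)
qed

lemma std_cont: "isCont (cdf std_normal_distribution) t"
proof -
  interpret std: real_distribution std_normal_distribution by (rule real_dist_normal_dist)
  have "emeasure std_normal_distribution {t} = 0"
    by (simp add: emeasure_density nn_integral_indicator_singleton)
  then show ?thesis by (simp add: std.isCont_cdf measure_def)
qed

lemma main_conv:
  fixes C :: "nat \<Rightarrow> 'a \<Rightarrow> bool" and x :: real
  assumes Rm: "\<And>n. Rcount C n \<in> measurable M (count_space UNIV)"
    and sand1: "\<And>n k w. w \<in> space M \<Longrightarrow> k < n \<Longrightarrow> Rcount C n w \<le> k \<Longrightarrow> GammaS r LS (n - 1 - k) w \<le> GammaR s LR k w"
    and sand2: "\<And>n k w. w \<in> space M \<Longrightarrow> k < n \<Longrightarrow> \<not> Rcount C n w \<le> k \<Longrightarrow> GammaR s LR k w \<le> GammaS r LS (n - 1 - k) w"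
    and v: "variance (Y 0) > 0"
  shows "(\<lambda>n. prob {w\<in>space M. (real (Rcount C n w) - real n / 2) / sqrt (real n) \<le> x})
           \<longlonglongrightarrow> cdf std_normal_distribution (mu * (2 * x) / sqrt (1 / 2 * variance (Y 0)))"
proof -
  define v where "v = variance (Y 0)"
  have v0: "v > 0" using v by (simp add: v_def)
  define k where "k = kf x"
  define m where "m = mf x"
  define p where "p = pf x"
  define J where "J n = (\<lambda>j. (True, j)) ` {p n + 1..k n} \<union> (\<lambda>j. (False, j)) ` {p n + 1..m n}" for n
  define T where "T n w = (\<Sum>a\<in>J n. U a w)" for n w
  define Z where "Z n w = (\<Sum>i<p n. Y i w) / sqrt (real (p n) * v)" for n w
  define W where "W n w = (mu * (real (k n) - real (m n)) + T n w) / sqrt (real (p n) * v)" for n w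
  define w0 where "w0 = mu * (2 * x) / sqrt (1 / 2 * v)"
  have J_sub: "J n \<subseteq> UNIV \<times> {1..}" for n by (auto simp: J_def)
  have J_fin: "finite (J n)" for n by (auto simp: J_def)
  have T_meas: "T n \<in> borel_measurable M" for n
    unfolding T_def using J_sub[of n] by (intro borel_measurable_sum U_meas) auto
  have Zm: "Z n \<in> borel_measurable M" for n unfolding Z_def by measurable
  have Wm: "W n \<in> borel_measurable M" for n unfolding W_def using T_meas[of n] by measurable
  have "(\<lambda>n. prob {w\<in>space M. (real (Rcount C n w) - real n / 2) / sqrt (real n) \<le> x})
           \<longlonglongrightarrow> cdf std_normal_distribution w0"
  proof (rule slutsky_sandwich[where Z=Z and W=W and F="cdf std_normal_distribution" and w=w0])
    show "Z n \<in> borel_measurable M" for n by (rule Zm)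
    show "W n \<in> borel_measurable M" for n by (rule Wm)
    show "isCont (cdf std_normal_distribution) w0" by (rule std_cont)
    show "(\<lambda>n. prob {w\<in>space M. Z n w \<le> t}) \<longlonglongrightarrow> cdf std_normal_distribution t" for t
    proof -
      have "(\<lambda>n. (\<lambda>q. prob {w\<in>space M. (\<Sum>i<q. Y i w) / sqrt (real q * variance (Y 0)) \<le> t}) (p n))
              \<longlonglongrightarrow> cdf std_normal_distribution t"
        by (rule filterlim_compose[OF clt[OF v] pf_at_top[of x, folded p_def]])
      then show ?thesis by (simp add: Z_def v_def)
    qed
    show "(\<lambda>n. prob {w\<in>space M. e \<le> \<bar>W n w - w0\<bar>}) \<longlonglongrightarrow> 0" if e: "e > 0" for e
    proof (rule Lim_null_comparison)
      define c where "c n = mu * (real (k n) - real (m n)) / sqrt (real (p n) * v)" for n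
      have cl: "c \<longlonglongrightarrow> w0" unfolding c_def w0_def k_def m_def p_def by (rule limc[OF v0])
      have ce: "eventually (\<lambda>n. \<bar>c n - w0\<bar> < e / 2) sequentially"
        using tendstoD[OF cl, of "e / 2"] e by (simp add: dist_real_def)
      show "(\<lambda>n. \<bar>real (k n) - real (m n)\<bar> / real (p n) * (4 / (e\<^sup>2 * v))) \<longlonglongrightarrow> 0"
        using tendsto_mult[OF limC[of x] tendsto_const[of "4 / (e\<^sup>2 * v)"]]
        by (simp add: k_def m_def p_def)
      show "eventually (\<lambda>n. norm (prob {w\<in>space M. e \<le> \<bar>W n w - w0\<bar>}) \<le>
               \<bar>real (k n) - real (m n)\<bar> / real (p n) * (4 / (e\<^sup>2 * v))) sequentially"
        using eventually_big[of x] ce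
      proof eventually_elim
        case (elim n)
        note kb = kmp_bounds[OF elim(1), folded k_def m_def p_def]
        have pp: "real (p n) > 0" using kb(3) by simp
        define q where "q = sqrt (real (p n) * v)"
        have q: "q > 0" using pp v0 by (simp add: q_def)
        have Wc: "W n w - w0 = T n w / q + (c n - w0)" for w
          using q by (simp add: W_def c_def q_def[symmetric] add_divide_distrib)
        have sub: "{w\<in>space M. e \<le> \<bar>W n w - w0\<bar>} \<subseteq> {w\<in>space M. e / 2 * q \<le> \<bar>\<Sum>a\<in>J n. U a w\<bar>}"
        proof safe
          fix w assume w: "w \<in> space M" and le: "e \<le> \<bar>W n w - w0\<bar>"
          show "e / 2 * q \<le> \<bar>\<Sum>a\<in>J n. U a w\<bar>"
          proof (rule ccontr)
            assume "\<not> e / 2 * q \<le> \<bar>\<Sum>a\<in>J n. U a w\<bar>"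
            then have "\<bar>T n w\<bar> < e / 2 * q" by (simp add: T_def)
            then have "\<bar>T n w / q\<bar> < e / 2" using q by (simp add: abs_divide pos_divide_less_eq)
            then have "\<bar>W n w - w0\<bar> < e" using Wc[of w] elim(2) by linarith
            then show False using le by simp
          qed
        qed
        have "prob {w\<in>space M. e \<le> \<bar>W n w - w0\<bar>} \<le> prob {w\<in>space M. e / 2 * q \<le> \<bar>\<Sum>a\<in>J n. U a w\<bar>}"
        proof (rule finite_measure_mono[OF sub])
          have "(\<lambda>w. \<Sum>a\<in>J n. U a w) \<in> borel_measurable M" using T_meas[of n] by (simp add: T_def[abs_def])
          then show "{w\<in>space M. e / 2 * q \<le> \<bar>\<Sum>a\<in>J n. U a w\<bar>} \<in> sets M" by measurable
        qed
        also have "\<dots> \<le> card (J n) / (e / 2 * q)\<^sup>2"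
          using e q by (intro sum_U_tail J_fin J_sub) auto
        also have "card (J n) = (k n - p n) + (m n - p n)"
        proof -
          have "card (J n) = card ((\<lambda>j. (True, j)) ` {p n + 1..k n}) + card ((\<lambda>j. (False, j)) ` {p n + 1..m n})"
            unfolding J_def by (rule card_Un_disjoint) auto
          also have "\<dots> = (k n - p n) + (m n - p n)"
            by (subst (1 2) card_image) (auto simp: inj_on_def)
          finally show ?thesis .
        qed
        also have "real ((k n - p n) + (m n - p n)) = \<bar>real (k n) - real (m n)\<bar>"
          unfolding p_def pf_def k_def m_def by (simp add: of_nat_diff min_def abs_if)
        also have "(e / 2 * q)\<^sup>2 = e\<^sup>2 / 4 * (real (p n) * v)"
          using pp v0 by (simp add: q_def power_mult_distrib power_divide)
        also have "\<bar>real (k n) - real (m n)\<bar> / (e\<^sup>2 / 4 * (real (p n) * v)) =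
                   \<bar>real (k n) - real (m n)\<bar> / real (p n) * (4 / (e\<^sup>2 * v))"
          using pp v0 e by (simp add: field_simps)
        finally show ?case by simp
      qed
    qed
    show "eventually (\<lambda>n. prob {w\<in>space M. Z n w < W n w} \<le> prob {w\<in>space M. (real (Rcount C n w) - real n / 2) / sqrt (real n) \<le> x}
       \<and> prob {w\<in>space M. (real (Rcount C n w) - real n / 2) / sqrt (real n) \<le> x} \<le> prob {w\<in>space M. Z n w \<le> W n w}) sequentially"
      using eventually_big[of x]
    proof eventually_elim
      case (elim n)
      note kb = kmp_bounds[OF elim(1), folded k_def m_def p_def]
      have kn: "k n < n" using kf_bounds(5)[OF elim(1)] by (simp add: k_def)
      have mdef: "m n = n - 1 - k n" by (simp add: m_def k_def mf_def)
      have pk: "p n \<le> k n" and pm: "p n \<le> m n" by (simp_all add: p_def pf_def k_def m_def)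
      have pp: "real (p n) > 0" using kb(3) by simp
      have np: "real n > 0" using pp pk kn by linarith
      define q where "q = sqrt (real (p n) * v)"
      have q: "q > 0" using pp v0 by (simp add: q_def)
      have Rreal[measurable]: "(\<lambda>w. real (Rcount C n w)) \<in> borel_measurable M"
        by (rule measurable_compose[OF Rm]) auto
      have y0: "real n / 2 + x * sqrt (real n) \<ge> 0"
        using kf_bounds(3)[OF elim(1)] kf_bounds(1)[OF elim(1)] by linarith
      have seteq: "{w\<in>space M. (real (Rcount C n w) - real n / 2) / sqrt (real n) \<le> x} = {w\<in>space M. Rcount C n w \<le> k n}"
      proof -
        have "(real R - real n / 2) / sqrt (real n) \<le> x \<longleftrightarrow> R \<le> k n" for R
        proof -
          have "(real R - real n / 2) / sqrt (real n) \<le> x \<longleftrightarrow> real R \<le> real n / 2 + x * sqrt (real n)"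
            using np by (simp add: pos_divide_le_eq algebra_simps)
          also have "\<dots> \<longleftrightarrow> R \<le> k n"
          proof
            assume "real R \<le> real n / 2 + x * sqrt (real n)"
            then show "R \<le> k n" unfolding k_def kf_def by (rule le_nat_floor)
          next
            assume "R \<le> k n"
            then have "real R \<le> real (k n)" by simp
            also have "\<dots> \<le> real n / 2 + x * sqrt (real n)" using kf_bounds(1)[OF elim(1)] by (simp add: k_def)
            finally show "real R \<le> real n / 2 + x * sqrt (real n)" .
          qed
          finally show ?thesis .
        qed
        then show ?thesis by auto
      qed
      have key: "GammaR s LR (k n) w - GammaS r LS (m n) w = - (\<Sum>i<p n. Y i w) + (mu * (real (k n) - real (m n)) + T n w)" for w
        using key_identity[OF pk pm, of w] by (simp add: T_def J_def)
      have ZW: "Z n w = (\<Sum>i<p n. Y i w) / q" "W n w = (mu * (real (k n) - real (m n)) + T n w) / q" for w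
        by (simp_all add: Z_def W_def q_def)
      have s1: "{w\<in>space M. Z n w < W n w} \<subseteq> {w\<in>space M. Rcount C n w \<le> k n}"
      proof safe
        fix w assume w: "w \<in> space M" and zw: "Z n w < W n w"
        then have "(\<Sum>i<p n. Y i w) < mu * (real (k n) - real (m n)) + T n w"
          using q by (simp add: ZW divide_less_cancel)
        then have "\<not> GammaR s LR (k n) w \<le> GammaS r LS (m n) w" using key[of w] by linarith
        then show "Rcount C n w \<le> k n" using sand2[OF w kn] mdef by auto
      qed
      have s2: "{w\<in>space M. Rcount C n w \<le> k n} \<subseteq> {w\<in>space M. Z n w \<le> W n w}"
      proof safe
        fix w assume w: "w \<in> space M" and R: "Rcount C n w \<le> k n"
        have "GammaS r LS (m n) w \<le> GammaR s LR (k n) w" using sand1[OF w kn R] mdef by simp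
        then have "(\<Sum>i<p n. Y i w) \<le> mu * (real (k n) - real (m n)) + T n w" using key[of w] by linarith
        then show "Z n w \<le> W n w" using q by (simp add: ZW divide_le_cancel)
      qed
      have Rset: "{w\<in>space M. Rcount C n w \<le> k n} \<in> sets M"
      proof -
        have "{w\<in>space M. Rcount C n w \<le> k n} = {w\<in>space M. real (Rcount C n w) \<le> real (k n)}" by auto
        also have "\<dots> \<in> sets M" by measurable
        finally show ?thesis .
      qed
      have "prob {w\<in>space M. Z n w < W n w} \<le> prob {w\<in>space M. Rcount C n w \<le> k n}"
        by (rule finite_measure_mono[OF s1 Rset])
      moreover have "prob {w\<in>space M. Rcount C n w \<le> k n} \<le> prob {w\<in>space M. Z n w \<le> W n w}"
        using Zm[of n] Wm[of n] by (intro finite_measure_mono[OF s2]) measurable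
      ultimately show ?case unfolding seteq by simp
    qed
  qed
  then show ?thesis by (simp add: w0_def v_def)
qed

end

lemma normal_cdf_scale:
  assumes sg: "\<sigma> > 0"
  shows "cdf (density lborel (normal_density 0 \<sigma>)) x = cdf std_normal_distribution (x / \<sigma>)"
proof -
  interpret S: prob_space std_normal_distribution
    using real_dist_normal_dist by (simp add: real_distribution_def)
  have d0: "distributed std_normal_distribution lborel (\<lambda>t. t) std_normal_density"
    unfolding distributed_def by (simp add: distr_id2)
  have "distributed std_normal_distribution lborel (\<lambda>t. 0 + \<sigma> * t) (normal_density (0 + \<sigma> * 0) (\<bar>\<sigma>\<bar> * 1))"
    by (rule S.normal_density_affine[OF d0]) (use sg in auto)
  then have D: "distr std_normal_distribution lborel (\<lambda>t. \<sigma> * t) = density lborel (normal_density 0 \<sigma>)"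
    using sg by (simp add: distributed_def)
  have "cdf (density lborel (normal_density 0 \<sigma>)) x = measure (distr std_normal_distribution lborel (\<lambda>t. \<sigma> * t)) {..x}"
    by (simp add: D cdf_def2)
  also have "\<dots> = measure std_normal_distribution ((\<lambda>t. \<sigma> * t) -` {..x} \<inter> space std_normal_distribution)"
    by (subst measure_distr) auto
  also have "(\<lambda>t. \<sigma> * t) -` {..x} \<inter> space std_normal_distribution = {..x / \<sigma>}"
    using sg by (auto simp: pos_le_divide_eq mult.commute)
  finally show ?thesis by (simp add: cdf_def2)
qed

theorem theorem3p2:
  fixes M :: "'a measure" and N :: "'b measure" and U :: "'a \<Rightarrow> 'b"
    and r s :: "nat \<Rightarrow> real"
    and LR LS :: "nat \<Rightarrow> 'a \<Rightarrow> nat"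
    and C :: "nat \<Rightarrow> 'a \<Rightarrow> bool"
  assumes M: "prob_space M"
    and r_nonneg: "\<And>i. r i \<ge> 0" and r0: "r 0 = 0" and r_sum: "r sums 1"
    and s_nonneg: "\<And>i. s i \<ge> 0" and s0: "s 0 = 0" and s_sum: "s sums 1"
    and mu_pos: "(\<Sum>i. r i * s i) > 0"
    and LR_rv: "\<And>n. n \<ge> 1 \<Longrightarrow> LR n \<in> measurable M (count_space UNIV)"
    and LS_rv: "\<And>n. n \<ge> 1 \<Longrightarrow> LS n \<in> measurable M (count_space UNIV)"
    and LR_dist: "\<And>n i. n \<ge> 1 \<Longrightarrow> measure M {w \<in> space M. LR n w = i} = r i"
    and LS_dist: "\<And>n i. n \<ge> 1 \<Longrightarrow> measure M {w \<in> space M. LS n w = i} = s i"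
    and labels_indep: "prob_space.indep_vars M (\<lambda>_. count_space UNIV)
                         (\<lambda>(b, n). if b then LR n else LS n) (UNIV \<times> {1..})"
    and U_rv: "U \<in> measurable M N"
    and U_indep: "prob_space.indep_set M (sets (vimage_algebra (space M) U N))
                    (sets (vimage_algebra (space M)
                       (\<lambda>w. restrict (\<lambda>(b, n). if b then LR n w else LS n w) (UNIV \<times> {1..}))
                       (\<Pi>\<^sub>M i\<in>(UNIV \<times> {1..}). count_space UNIV)))"
    and sigma_pos: "sqrt (prob_space.variance M (\<lambda>w. s (LR 1 w)))
                    + sqrt (prob_space.variance M (\<lambda>w. r (LS 1 w))) > 0"
    and policy: "\<And>n. C (Suc n) \<in> measurable (filt M N U LR LS C n) (count_space UNIV)"
    and greedy_R: "\<And>n w. n \<ge> 1 \<Longrightarrow> w \<in> space M \<Longrightarrow>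
                    GammaS r LS (Scount C n w) w > GammaR s LR (Rcount C n w) w \<Longrightarrow> C (Suc n) w"
    and greedy_S: "\<And>n w. n \<ge> 1 \<Longrightarrow> w \<in> space M \<Longrightarrow>
                    GammaS r LS (Scount C n w) w < GammaR s LR (Rcount C n w) w \<Longrightarrow> \<not> C (Suc n) w"
  shows "weak_conv_m
           (\<lambda>n. distr M borel (\<lambda>w. (real (Rcount C n w) - real n / 2) / sqrt (real n)))
           (density lborel (normal_density 0
              (sqrt ((prob_space.variance M (\<lambda>w. s (LR 1 w))
                      + prob_space.variance M (\<lambda>w. r (LS 1 w)))
                     / (8 * (\<Sum>i. r i * s i)\<^sup>2)))))"
proof -
  interpret gsetup M r s LR LS
    by (rule gsetup.intro[OF M], unfold_locales)
       (use r_nonneg r_sum s_nonneg s_sum LR_rv LS_rv LR_dist LS_dist labels_indep in auto)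
  have Cm: "\<forall>j. 1 \<le> j \<longrightarrow> j \<le> n \<longrightarrow> C j \<in> measurable M (count_space UNIV)" for n
    by (rule C_meas[OF U_rv LR_rv LS_rv policy])
  have Rm: "Rcount C n \<in> measurable M (count_space UNIV)" for n
    using Cm[of n] by (intro Rcount_meas) auto
  note sandw = greedy_sandwich[where r=r and s=s and LR=LR and LS=LS and C=C, OF r_nonneg s_nonneg greedy_R greedy_S]
  define vR where "vR = variance (\<lambda>w. s (LR 1 w))"
  define vS where "vS = variance (\<lambda>w. r (LS 1 w))"
  have vR0: "vR \<ge> 0" unfolding vR_def by (rule integral_nonneg_AE) auto
  have vS0: "vS \<ge> 0" unfolding vS_def by (rule integral_nonneg_AE) auto
  have vpos: "vR + vS > 0"
  proof (rule ccontr)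
    assume "\<not> vR + vS > 0"
    then have "vR = 0" "vS = 0" using vR0 vS0 by linarith+
    then show False using sigma_pos by (simp add: vR_def vS_def)
  qed
  have vY: "variance (Y 0) = vR + vS" using VarY0 by (simp add: vR_def vS_def)
  have mu: "mu > 0" using mu_pos by (simp add: mu_def)
  have conv: "(\<lambda>n. prob {w\<in>space M. (real (Rcount C n w) - real n / 2) / sqrt (real n) \<le> x})
           \<longlonglongrightarrow> cdf std_normal_distribution (mu * (2 * x) / sqrt (1 / 2 * variance (Y 0)))" for x
    by (rule main_conv[OF Rm]) (use sandw vpos vY in auto)
  define sG where "sG = sqrt ((vR + vS) / (8 * mu\<^sup>2))"
  have sG: "sG > 0" using vpos mu by (simp add: sG_def)
  have eq: "mu * (2 * x) / sqrt (1 / 2 * (vR + vS)) = x / sG" for x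
  proof -
    have "sqrt (8 * mu\<^sup>2) = 2 * sqrt 2 * mu"
    proof -
      have "8 * mu\<^sup>2 = (2 * sqrt 2 * mu)\<^sup>2" by (simp add: power_mult_distrib)
      then show ?thesis using mu by simp
    qed
    then have s1: "sG = sqrt (vR + vS) / (2 * sqrt 2 * mu)" by (simp add: sG_def real_sqrt_divide)
    have s2: "sqrt (1 / 2 * (vR + vS)) = sqrt (vR + vS) / sqrt 2" by (simp add: real_sqrt_divide real_sqrt_mult)
    have a: "sqrt (vR + vS) > 0" using vpos by simp
    have b: "sqrt 2 > (0::real)" by simp
    show ?thesis unfolding s1 s2 using a b mu by (simp add: field_simps)
  qed
  have meas: "(\<lambda>w. (real (Rcount C n w) - real n / 2) / sqrt (real n)) \<in> borel_measurable M" for n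
  proof -
    have "(\<lambda>w. real (Rcount C n w)) \<in> borel_measurable M" by (rule measurable_compose[OF Rm]) auto
    then show ?thesis by measurable
  qed
  show ?thesis
    unfolding weak_conv_m_def weak_conv_def
  proof (intro allI impI)
    fix x
    have "cdf (density lborel (normal_density 0 sG)) x = cdf std_normal_distribution (x / sG)"
      by (rule normal_cdf_scale[OF sG])
    then show "(\<lambda>n. cdf (distr M borel (\<lambda>w. (real (Rcount C n w) - real n / 2) / sqrt (real n))) x)
      \<longlonglongrightarrow> cdf (density lborel (normal_density 0 (sqrt ((variance (\<lambda>w. s (LR 1 w)) + variance (\<lambda>w. r (LS 1 w))) / (8 * (\<Sum>i. r i * s i)\<^sup>2))))) x"
      using conv[of x] eq[of x] vY by (simp add: cdf_distr[OF meas] sG_def vR_def vS_def mu_def)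
  qed
qed

end
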